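(* Let $K$ be a field and regard $K[x_1,\dots,x_n]$ as $(K[x_1])[\tilde{\bm{x}}]$ with $\tilde{\bm{x}}=(x_2,\dots,x_n)$ and a fixed monomial ordering $\succ$ on monomials in $\tilde{\bm{x}}$. Let $F=\{f_1,\dots,f_s\}\subset(K[x_1])[\tilde{\bm{x}}]\setminus K[x_1]$ with $\operatorname{lm}(f_j)=\tilde{\bm{x}}^\alpha$ for all $1\le j\le s$. If $f:=\sum_{j=1}^s f_j$ satisfies $\operatorname{lm}(f)\prec\tilde{\bm{x}}^\alpha$, then there exist $b,b_1,\dots,b_{s-1}\in K[x_1]\setminus\{0\}$ such that $$b f=\sum_{1\le j<s}b_jS(f_j,f_s).$$ Moreover, for each irreducible polynomial $p\in K[x_1]\setminus K$, the elements of $F$ can be relabeled so that the multiplier $b$ in such a representation is not divisible by $p$.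
   Context: For nonzero $f=\sum c_\alpha\tilde{\bm{x}}^\alpha$ with $c_\alpha\in K[x_1]$, $\operatorname{lm}(f)$ is the $\succ$-largest monomial with nonzero coefficient, $\operatorname{lc}(f)$ its coefficient, $\operatorname{lt}(f)=\operatorname{lc}(f)\operatorname{lm}(f)$. For $a,b\in K[x_1]\setminus\{0\}$, $\gcd$ is monic and $\operatorname{lcm}(a,b)=ab/\gcd(a,b)$. For $f,g\in(K[x_1])[\tilde{\bm{x}}]\setminus K[x_1]$, $S(f,g):=\frac{m\tilde{\bm{x}}^\gamma}{\operatorname{lt}(f)}f-\frac{m\tilde{\bm{x}}^\gamma}{\operatorname{lt}(g)}g$ with $m=\operatorname{lcm}(\operatorname{lc}f,\operatorname{lc}g)$ and $\tilde{\bm{x}}^\gamma=\operatorname{lcm}(\operatorname{lm}f,\operatorname{lm}g)$. *)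

theory Defs
  imports "HOL-Library.Poly_Mapping" "HOL-Computational_Algebra.Computational_Algebra"
begin

text \<open>Monomials in the variables x2..xn (indexed by a finite type 'v) are exponent
vectors finitely supported maps 'v to nat; x^0 = 1.  Elements of (K[x1])[x2..xn] are finitely supported maps from
monomials to coefficients in K[x1] (type 'k poly); multiplication is the convolution
product of Poly_Mapping, and Poly_Mapping.single m c is the term c x^m.\<close>

type_synonym 'v monom = "'v \<Rightarrow>\<^sub>0 nat"
type_synonym ('v, 'k) mpoly1 = "'v monom \<Rightarrow>\<^sub>0 'k poly"

definition monomial_order :: "('v monom \<Rightarrow> 'v monom \<Rightarrow> bool) \<Rightarrow> bool" where
  "monomial_order lessm \<longleftrightarrow>
     (\<forall>a. \<not> lessm a a) \<and>
     (\<forall>a b c. lessm a b \<longrightarrow> lessm b c \<longrightarrow> lessm a c) \<and>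
     (\<forall>a b. a \<noteq> b \<longrightarrow> lessm a b \<or> lessm b a) \<and>
     (\<forall>a b c. lessm a b \<longrightarrow> lessm (a + c) (b + c)) \<and>
     wfP lessm"

definition lm :: "('v monom \<Rightarrow> 'v monom \<Rightarrow> bool) \<Rightarrow> ('v, 'k::field_gcd) mpoly1 \<Rightarrow> 'v monom" where
  "lm lessm f = (THE m. m \<in> Poly_Mapping.keys f \<and> (\<forall>m'\<in>Poly_Mapping.keys f. m' \<noteq> m \<longrightarrow> lessm m' m))"

definition lc :: "('v monom \<Rightarrow> 'v monom \<Rightarrow> bool) \<Rightarrow> ('v, 'k::field_gcd) mpoly1 \<Rightarrow> 'k poly" where
  "lc lessm f = Poly_Mapping.lookup f (lm lessm f)"

definition lt :: "('v monom \<Rightarrow> 'v monom \<Rightarrow> bool) \<Rightarrow> ('v, 'k::field_gcd) mpoly1 \<Rightarrow> ('v, 'k) mpoly1" where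
  "lt lessm f = Poly_Mapping.single (lm lessm f) (lc lessm f)"

definition in_base :: "('v, 'k::field_gcd) mpoly1 \<Rightarrow> bool" where
  "in_base f \<longleftrightarrow> Poly_Mapping.keys f \<subseteq> {0}"

text \<open>lcm of nonzero a, b in K[x1] as in the paper: a b / gcd(a,b), gcd monic
(not normalized to be monic itself).\<close>
definition lcm1 :: "'k::field_gcd poly \<Rightarrow> 'k poly \<Rightarrow> 'k poly" where
  "lcm1 a b = (a * b) div gcd a b"

text \<open>lcm of monomials: componentwise maximum of exponents.\<close>
definition lcm_monom :: "'v monom \<Rightarrow> 'v monom \<Rightarrow> 'v monom" where
  "lcm_monom a b = a + (b - a)"

definition spoly :: "('v monom \<Rightarrow> 'v monom \<Rightarrow> bool) \<Rightarrow> ('v, 'k::field_gcd) mpoly1 \<Rightarrow> ('v, 'k) mpoly1 \<Rightarrow> ('v, 'k) mpoly1" where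
  "spoly lessm f g =
     (let m = lcm1 (lc lessm f) (lc lessm g);
          \<gamma> = lcm_monom (lm lessm f) (lm lessm g)
      in Poly_Mapping.single (\<gamma> - lm lessm f) (m div lc lessm f) * f
         - Poly_Mapping.single (\<gamma> - lm lessm g) (m div lc lessm g) * g)"

abbreviation cst :: "'k::field_gcd poly \<Rightarrow> ('v, 'k) mpoly1" where
  "cst b \<equiv> Poly_Mapping.single 0 b"

end

theory Submission imports Defs begin

lemma max_exists:
  fixes A :: "'a set"
  assumes fin: "finite A" and ne: "A \<noteq> {}"
    and tr: "\<And>a b c. R a b \<Longrightarrow> R b c \<Longrightarrow> R a c"
    and tot: "\<And>a b. a \<noteq> b \<Longrightarrow> R a b \<or> R b a"
  shows "\<exists>m\<in>A. \<forall>m'\<in>A. m' \<noteq> m \<longrightarrow> R m' m"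
  using fin ne
proof (induction A rule: finite_ne_induct)
  case (singleton x) then show ?case by simp
next
  case (insert x F)
  then obtain m where m: "m \<in> F" "\<forall>m'\<in>F. m' \<noteq> m \<longrightarrow> R m' m" by blast
  show ?case
  proof (cases "R x m")
    case True then show ?thesis using m by auto
  next
    case False
    then have "x = m \<or> R m x" using tot by blast
    then show ?thesis using m tr insert.hyps by (metis insertCI insertE)
  qed
qed

lemma lm_prop:
  assumes mord: "monomial_order lessm" and nz: "f \<noteq> 0"
  shows "lm lessm f \<in> Poly_Mapping.keys f \<and> (\<forall>m'\<in>Poly_Mapping.keys f. m' \<noteq> lm lessm f \<longrightarrow> lessm m' (lm lessm f))"
proof -
  have irr: "\<And>a. \<not> lessm a a" and tr: "\<And>a b c. lessm a b \<Longrightarrow> lessm b c \<Longrightarrow> lessm a c"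
    and tot: "\<And>a b. a \<noteq> b \<Longrightarrow> lessm a b \<or> lessm b a"
    using mord unfolding monomial_order_def by blast+
  obtain m where m: "m \<in> Poly_Mapping.keys f" "\<forall>m'\<in>Poly_Mapping.keys f. m' \<noteq> m \<longrightarrow> lessm m' m"
    using max_exists[of "Poly_Mapping.keys f" lessm] nz tr tot by auto
  have "lm lessm f = m" unfolding lm_def
  proof (rule the_equality)
    show "m \<in> Poly_Mapping.keys f \<and> (\<forall>m'\<in>Poly_Mapping.keys f. m' \<noteq> m \<longrightarrow> lessm m' m)" using m by blast
  next
    fix n assume n: "n \<in> Poly_Mapping.keys f \<and> (\<forall>m'\<in>Poly_Mapping.keys f. m' \<noteq> n \<longrightarrow> lessm m' n)"
    show "n = m"
    proof (rule ccontr)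
      assume "n \<noteq> m"
      then have "lessm n m" "lessm m n" using m n by auto
      then show False using tr irr by blast
    qed
  qed
  then show ?thesis using m by simp
qed

lemma lc_nz:
  assumes mord: "monomial_order lessm" and nz: "f \<noteq> 0"
  shows "lc lessm f \<noteq> 0"
  using lm_prop[OF assms] unfolding lc_def by (simp add: in_keys_iff)

lemma lookup_below:
  assumes mord: "monomial_order lessm" and lt: "f = 0 \<or> lessm (lm lessm f) a"
  shows "Poly_Mapping.lookup f a = 0"
proof (cases "f = 0")
  case False
  have irr: "\<And>a. \<not> lessm a a" and tr: "\<And>a b c. lessm a b \<Longrightarrow> lessm b c \<Longrightarrow> lessm a c"
    using mord unfolding monomial_order_def by blast+
  have l: "lessm (lm lessm f) a" using lt False by simp
  show ?thesis
  proof (rule ccontr)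
    assume "Poly_Mapping.lookup f a \<noteq> 0"
    then have "a \<in> Poly_Mapping.keys f" by (simp add: in_keys_iff)
    moreover have "a \<noteq> lm lessm f" using l irr by auto
    ultimately have "lessm a (lm lessm f)" using lm_prop[OF mord False] by blast
    then show False using l tr irr by blast
  qed
qed simp

lemma spoly_same:
  fixes f g :: "('v, 'k::field_gcd) mpoly1"
  assumes "lm lessm f = \<alpha>" "lm lessm g = \<alpha>" "lc lessm f \<noteq> 0" "lc lessm g \<noteq> 0"
  shows "spoly lessm f g = cst (lc lessm g div gcd (lc lessm f) (lc lessm g)) * f
     - cst (lc lessm f div gcd (lc lessm f) (lc lessm g)) * g"
proof -
  define a where "a = lc lessm f"
  define b where "b = lc lessm g"
  have 1: "lcm1 a b div a = b div gcd a b"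
    unfolding lcm1_def using assms(3) unfolding a_def
    by (metis dvd_div_mult gcd_dvd2 mult.commute nonzero_mult_div_cancel_left)
  have 2: "lcm1 a b div b = a div gcd a b"
    unfolding lcm1_def using assms(4) unfolding b_def
    by (metis dvd_div_mult gcd_dvd1 nonzero_mult_div_cancel_right)
  show ?thesis using assms 1 2 unfolding spoly_def lcm_monom_def a_def b_def by (simp add: Let_def)
qed

lemma cst_sum: "(\<Sum>j\<in>A. cst (e j)) = (cst (\<Sum>j\<in>A. e j) :: ('v, 'k::field_gcd) mpoly1)"
  by (induction A rule: infinite_finite_induct) (auto simp: single_add)

lemma div_chain:
  fixes d g c :: "'k::field_gcd poly"
  assumes "d dvd g" "g dvd c" "g \<noteq> 0"
  shows "(g div d) * (c div g) = c div d"
proof -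
  have d0: "d \<noteq> 0" using assms by auto
  have "c = d * ((g div d) * (c div g))"
    using assms by (simp add: mult.assoc[symmetric])
  then show ?thesis using d0 by (metis nonzero_mult_div_cancel_left)
qed

lemma core:
  fixes G :: "nat \<Rightarrow> ('v, 'k::field_gcd) mpoly1"
  assumes s1: "1 \<le> s"
    and lmG: "\<forall>j\<in>{1..s}. lm lessm (G j) = \<alpha>"
    and nz: "\<forall>j\<in>{1..s}. lc lessm (G j) \<noteq> 0"
    and sum0: "(\<Sum>j=1..s. lc lessm (G j)) = 0"
    and d0: "d \<noteq> 0"
    and dv: "\<forall>j\<in>{1..s}. d dvd lc lessm (G j)"
  shows "cst (lc lessm (G s) div d) * (\<Sum>j=1..s. G j)
     = (\<Sum>j=1..<s. cst (gcd (lc lessm (G j)) (lc lessm (G s)) div d) * spoly lessm (G j) (G s))"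
proof -
  define c where "c = (\<lambda>j. lc lessm (G j))"
  define e where "e = (\<lambda>j. c j div d)"
  have ce: "\<And>j. j \<in> {1..s} \<Longrightarrow> c j = d * e j" using dv unfolding c_def e_def by simp
  have "d * (\<Sum>j=1..s. e j) = 0" using sum0 ce unfolding c_def[symmetric]
    by (simp add: sum_distrib_left)
  then have se: "(\<Sum>j=1..s. e j) = 0" using d0 by simp
  have split: "{1..s} = insert s {1..<s}" using s1 by auto
  have se2: "(\<Sum>j=1..<s. e j) = - e s" using se unfolding split by (simp add: eq_neg_iff_add_eq_0 add.commute)
  have sin: "s \<in> {1..s}" using s1 by simp
  have termeq: "cst (gcd (c j) (c s) div d) * spoly lessm (G j) (G s) = cst (e s) * G j - cst (e j) * G s"
    if j: "j \<in> {1..<s}" for j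
  proof -
    have jin: "j \<in> {1..s}" using j by simp
    have g0: "gcd (c j) (c s) \<noteq> 0" using nz sin unfolding c_def by simp
    have dg: "d dvd gcd (c j) (c s)" using dv jin sin unfolding c_def by simp
    have "spoly lessm (G j) (G s) = cst (c s div gcd (c j) (c s)) * G j - cst (c j div gcd (c j) (c s)) * G s"
      unfolding c_def using spoly_same[of lessm "G j" \<alpha> "G s"] lmG nz jin sin by simp
    have m1: "(gcd (c j) (c s) div d) * (c s div gcd (c j) (c s)) = e s"
      using div_chain[OF dg _ g0, of "c s"] unfolding e_def by simp
    have m2: "(gcd (c j) (c s) div d) * (c j div gcd (c j) (c s)) = e j"
      using div_chain[OF dg _ g0, of "c j"] unfolding e_def by simp
    have "cst (gcd (c j) (c s) div d) * spoly lessm (G j) (G s)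
       = cst (gcd (c j) (c s) div d) * cst (c s div gcd (c j) (c s)) * G j
         - cst (gcd (c j) (c s) div d) * cst (c j div gcd (c j) (c s)) * G s"
      unfolding \<open>spoly lessm (G j) (G s) = _\<close> by (simp only: right_diff_distrib mult.assoc)
    also have "\<dots> = cst (e s) * G j - cst (e j) * G s"
      by (simp only: mult_single m1 m2 add_0_right)
    finally show ?thesis .
  qed
  have "(\<Sum>j=1..<s. cst (gcd (c j) (c s) div d) * spoly lessm (G j) (G s))
      = (\<Sum>j=1..<s. cst (e s) * G j - cst (e j) * G s)" using termeq by simp
  also have "\<dots> = cst (e s) * (\<Sum>j=1..<s. G j) - (\<Sum>j=1..<s. cst (e j)) * G s"
    by (simp add: sum_subtractf sum_distrib_left sum_distrib_right)
  also have "\<dots> = cst (e s) * (\<Sum>j=1..<s. G j) + cst (e s) * G s"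
  proof -
    have "(\<Sum>j=1..<s. cst (e j)) = (- cst (e s) :: ('v, 'k) mpoly1)"
      by (simp only: cst_sum se2 single_uminus)
    then show ?thesis by simp
  qed
  also have "\<dots> = cst (e s) * (\<Sum>j=1..s. G j)"
    unfolding split by (simp add: algebra_simps)
  finally show ?thesis unfolding c_def e_def by simp
qed

lemma div_nz:
  fixes d c :: "'k::field_gcd poly"
  assumes "d dvd c" "c \<noteq> 0"
  shows "c div d \<noteq> 0"
  using assms by (metis dvd_div_mult_self mult_zero_left)

theorem lemma4p4:
  fixes lessm :: "('v::finite) monom \<Rightarrow> 'v monom \<Rightarrow> bool"
    and F :: "nat \<Rightarrow> ('v, 'k::field_gcd) mpoly1"
    and s :: nat and \<alpha> :: "'v monom"
  assumes mord: "monomial_order lessm"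
    and s1: "1 \<le> s"
    and dist: "inj_on F {1..s}"
    and notbase: "\<forall>j\<in>{1..s}. \<not> in_base (F j)"
    and lmF: "\<forall>j\<in>{1..s}. lm lessm (F j) = \<alpha>"
    and lmsum: "(\<Sum>j=1..s. F j) = 0 \<or> lessm (lm lessm (\<Sum>j=1..s. F j)) \<alpha>"
  shows "(\<exists>b bs. b \<noteq> 0 \<and> (\<forall>j\<in>{1..<s}. bs j \<noteq> 0) \<and>
            cst b * (\<Sum>j=1..s. F j) = (\<Sum>j=1..<s. cst (bs j) * spoly lessm (F j) (F s)))
       \<and> (\<forall>p :: 'k poly. irreducible p \<and> degree p > 0 \<longrightarrow>
            (\<exists>\<sigma>. bij_betw \<sigma> {1..s} {1..s} \<and>
               (\<exists>b bs. b \<noteq> 0 \<and> (\<forall>j\<in>{1..<s}. bs j \<noteq> 0) \<and>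
                  cst b * (\<Sum>j=1..s. F j) =
                    (\<Sum>j=1..<s. cst (bs j) * spoly lessm (F (\<sigma> j)) (F (\<sigma> s))) \<and>
                  \<not> p dvd b)))"
proof -
  define c where "c = (\<lambda>j. lc lessm (F j))"
  have Fnz: "F j \<noteq> 0" if "j \<in> {1..s}" for j
  proof
    assume "F j = 0"
    then have "Poly_Mapping.keys (F j) \<subseteq> {0}" by simp
    then show False using notbase that unfolding in_base_def by blast
  qed
  have cnz: "c j \<noteq> 0" if "j \<in> {1..s}" for j
    using lc_nz[OF mord Fnz[OF that]] unfolding c_def .
  have clook: "c j = Poly_Mapping.lookup (F j) \<alpha>" if "j \<in> {1..s}" for j
    using lmF that unfolding c_def lc_def by simp
  have sum0: "(\<Sum>j=1..s. c j) = 0"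
  proof -
    have "(\<Sum>j=1..s. c j) = (\<Sum>j=1..s. Poly_Mapping.lookup (F j) \<alpha>)"
      using clook by simp
    also have "\<dots> = Poly_Mapping.lookup (\<Sum>j=1..s. F j) \<alpha>" by (simp add: lookup_sum)
    also have "\<dots> = 0" using lookup_below[OF mord lmsum] .
    finally show ?thesis .
  qed
  have sin: "s \<in> {1..s}" using s1 by simp
  have part1: "\<exists>b bs. b \<noteq> 0 \<and> (\<forall>j\<in>{1..<s}. bs j \<noteq> 0) \<and>
            cst b * (\<Sum>j=1..s. F j) = (\<Sum>j=1..<s. cst (bs j) * spoly lessm (F j) (F s))"
  proof (intro exI conjI)
    show "c s \<noteq> 0" using cnz sin .
    show "\<forall>j\<in>{1..<s}. gcd (c j) (c s) \<noteq> 0" using cnz sin by simp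
    show "cst (c s) * (\<Sum>j=1..s. F j) = (\<Sum>j=1..<s. cst (gcd (c j) (c s)) * spoly lessm (F j) (F s))"
    proof -
      have cnz': "\<forall>j\<in>{1..s}. lc lessm (F j) \<noteq> 0" using cnz unfolding c_def by blast
      have sum0': "(\<Sum>j=1..s. lc lessm (F j)) = 0" using sum0 unfolding c_def by blast
      have d1: "\<forall>j\<in>{1..s}. (1::'k poly) dvd lc lessm (F j)" by simp
      show ?thesis using core[OF s1 lmF cnz' sum0' one_neq_zero d1] unfolding c_def div_by_1 .
    qed
  qed
  have part2: "\<exists>\<sigma>. bij_betw \<sigma> {1..s} {1..s} \<and>
               (\<exists>b bs. b \<noteq> 0 \<and> (\<forall>j\<in>{1..<s}. bs j \<noteq> 0) \<and>
                  cst b * (\<Sum>j=1..s. F j) =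
                    (\<Sum>j=1..<s. cst (bs j) * spoly lessm (F (\<sigma> j)) (F (\<sigma> s))) \<and>
                  \<not> p dvd b)"
    if p: "irreducible p" for p :: "'k poly"
  proof -
    have pnu: "\<not> is_unit p" using p irreducible_not_unit by blast
    have p0: "p \<noteq> 0" using p by auto
    define k where "k = Min ((\<lambda>j. multiplicity p (c j)) ` {1..s})"
    have "k \<in> (\<lambda>j. multiplicity p (c j)) ` {1..s}" unfolding k_def
      using s1 by (intro Min_in) auto
    then obtain j0 where j0: "j0 \<in> {1..s}" "multiplicity p (c j0) = k" by auto
    have kle: "k \<le> multiplicity p (c j)" if "j \<in> {1..s}" for j
      unfolding k_def using that by (intro Min_le) auto
    define \<sigma> where "\<sigma> = (\<lambda>j::nat. if j = j0 then s else if j = s then j0 else j)"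
    have \<sigma>in: "\<sigma> j \<in> {1..s}" if "j \<in> {1..s}" for j using that j0 sin unfolding \<sigma>_def by auto
    have bij: "bij_betw \<sigma> {1..s} {1..s}"
    proof -
      have inj: "inj_on \<sigma> {1..s}" unfolding inj_on_def \<sigma>_def by auto
      have "\<sigma> ` {1..s} = {1..s}"
      proof
        show "\<sigma> ` {1..s} \<subseteq> {1..s}" using \<sigma>in by auto
        show "{1..s} \<subseteq> \<sigma> ` {1..s}"
        proof
          fix x assume x: "x \<in> {1..s}"
          have "\<sigma> (\<sigma> x) = x" unfolding \<sigma>_def by auto
          then show "x \<in> \<sigma> ` {1..s}" using \<sigma>in[OF x] by (metis imageI)
        qed
      qed
      then show ?thesis using inj unfolding bij_betw_def by simp
    qed
    have \<sigma>s: "\<sigma> s = j0" unfolding \<sigma>_def by simp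
    define G where "G = (\<lambda>j. F (\<sigma> j))"
    have sumG: "(\<Sum>j=1..s. G j) = (\<Sum>j=1..s. F j)"
      unfolding G_def using sum.reindex_bij_betw[OF bij, of F] by simp
    have sumcG: "(\<Sum>j=1..s. lc lessm (G j)) = 0"
      unfolding G_def using sum.reindex_bij_betw[OF bij, of c] sum0 unfolding c_def by simp
    have dvG: "\<forall>j\<in>{1..s}. p ^ k dvd lc lessm (G j)"
    proof
      fix j assume j: "j \<in> {1..s}"
      show "p ^ k dvd lc lessm (G j)"
        using multiplicity_dvd'[OF kle[OF \<sigma>in[OF j]]] unfolding G_def c_def .
    qed
    have core2: "cst (lc lessm (G s) div p ^ k) * (\<Sum>j=1..s. G j)
     = (\<Sum>j=1..<s. cst (gcd (lc lessm (G j)) (lc lessm (G s)) div p ^ k) * spoly lessm (G j) (G s))"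
    proof -
      have lmG: "\<forall>j\<in>{1..s}. lm lessm (G j) = \<alpha>" using lmF \<sigma>in unfolding G_def by blast
      have nzG: "\<forall>j\<in>{1..s}. lc lessm (G j) \<noteq> 0" using cnz \<sigma>in unfolding G_def c_def by blast
      have pk0: "p ^ k \<noteq> 0" using p0 by simp
      show ?thesis by (rule core[OF s1 lmG nzG sumcG pk0 dvG])
    qed
    have Gs: "lc lessm (G s) = c j0" unfolding G_def c_def \<sigma>s by simp
    show ?thesis
    proof (intro exI conjI)
      show "bij_betw \<sigma> {1..s} {1..s}" using bij .
      have dj0: "p ^ k dvd c j0" using dvG sin Gs by metis
      show "c j0 div p ^ k \<noteq> 0" using div_nz[OF dj0 cnz[OF j0(1)]] .
      show "\<forall>j\<in>{1..<s}. gcd (lc lessm (G j)) (lc lessm (G s)) div p ^ k \<noteq> 0"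
      proof
        fix j assume j: "j \<in> {1..<s}"
        then have jin: "j \<in> {1..s}" by simp
        have "p ^ k dvd gcd (lc lessm (G j)) (lc lessm (G s))" using dvG jin sin by simp
        moreover have "gcd (lc lessm (G j)) (lc lessm (G s)) \<noteq> 0" using Gs cnz j0 by simp
        ultimately show "gcd (lc lessm (G j)) (lc lessm (G s)) div p ^ k \<noteq> 0" by (rule div_nz)
      qed
      show "cst (c j0 div p ^ k) * (\<Sum>j=1..s. F j) = (\<Sum>j=1..<s. cst (gcd (lc lessm (G j)) (lc lessm (G s)) div p ^ k) * spoly lessm (F (\<sigma> j)) (F (\<sigma> s)))"
        using core2 unfolding sumG Gs unfolding G_def .
      show "\<not> p dvd c j0 div p ^ k"
      proof
        assume "p dvd c j0 div p ^ k"
        then have "p ^ k * p dvd p ^ k * (c j0 div p ^ k)" by simp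
        then have "p ^ Suc k dvd c j0" using dj0 by (simp add: mult.commute)
        then have "Suc k \<le> multiplicity p (c j0)"
          using multiplicity_geI[OF cnz[OF j0(1)] pnu] by blast
        then show False using j0(2) by simp
      qed
    qed
  qed
  show ?thesis using part1 part2 by blast
qed

end
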